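(* Let $q=2^f$ with $f\ge4$, let $q_0<q$ be a power of $2$ with $\gcd(q-1,q_0^2-1)=1$, and let $u\in\mathscr{U}_{q,q_0}$. Let $\eta$ be a primitive element of $\mathbb{F}_q$ with $u=(1+\eta^{q_0})/(\eta+\eta^{q_0})$, and let $k$ be an integer with $1+\eta=\eta^{k+1}$. Then the subgraph of $\Gamma_u$ induced on the neighborhood $\Omega_u\cup\Omega_{u+1}$ of the identity vertex is isomorphic to the generalized Petersen graph $GPG(q-1,k)$.
   Context: For $a,c\in\mathbb{F}_q$ let $\Phi_{a,c}=\begin{bmatrix}1&0&0\\ a&1&0\\ c&a^{q_0}&1\end{bmatrix}$, $K=\{\Phi_{a,c}: a,c\in\mathbb{F}_q\}\le GL(3,\mathbb{F}_q)$, and for $v\in\mathbb{F}_q$ let $\Omega_v=\{\Phi_{a,va^{q_0+1}}: a\in\mathbb{F}_q^*\}$. $\Gamma_u=\mathrm{Cay}(K,\Omega_u\cup\Omega_{u+1})$ is the graph with vertex set $K$, $x,y$ adjacent iff $xy^{-1}\in\Omega_u\cup\Omega_{u+1}$. $\mathscr{U}_{q,q_0}$ is the set of $u\in\mathbb{F}_q$ such that (U1) $u=(1+\eta^{q_0})/(\eta+\eta^{q_0})$ for some primitive element $\eta$ of $\mathbb{F}_q$, and (U2) $X^{q_0+1}+uX^{q_0}+(u+1)X+1$ has no roots in $\mathbb{F}_q$. For an integer $n\ge3$ and an integer $k$, $GPG(n,k)$ is the graph with vertices $c_1,\dots,c_n,c_1',\dots,c_n'$ and edges $c_ic_{i+1}$,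 $c_ic_i'$, $c_i'c_{i+k}'$ ($i=1,\dots,n$, subscripts modulo $n$). *)

theory Defs
  imports "HOL-Analysis.Analysis"
begin

text \<open>Elements of F_q are modelled by a finite field type 'a (CARD('a) = q).
  3x3 matrices over F_q are elements of type 'a^3^3, with indices 0,1,2.\<close>

definition Phi :: "nat \<Rightarrow> 'a::field \<Rightarrow> 'a \<Rightarrow> 'a^3^3" where
  "Phi q0 a c = (\<chi> i j. if i = j then 1
      else if i = 1 \<and> j = 0 then a
      else if i = 2 \<and> j = 0 then c
      else if i = 2 \<and> j = 1 then a ^ q0
      else 0)"

definition Kgrp :: "nat \<Rightarrow> ('a::field^3^3) set" where
  "Kgrp q0 = {Phi q0 a c | a c. True}"

definition Omega :: "nat \<Rightarrow> 'a::field \<Rightarrow> ('a^3^3) set" where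
  "Omega q0 v = {Phi q0 a (v * a ^ (q0 + 1)) | a. a \<noteq> 0}"

definition Gamma_adj :: "nat \<Rightarrow> 'a::field \<Rightarrow> 'a^3^3 \<Rightarrow> 'a^3^3 \<Rightarrow> bool" where
  "Gamma_adj q0 u x y \<longleftrightarrow> x \<in> Kgrp q0 \<and> y \<in> Kgrp q0 \<and>
      x ** matrix_inv y \<in> Omega q0 u \<union> Omega q0 (u + 1)"

definition primitive_elem :: "'a::field \<Rightarrow> bool" where
  "primitive_elem \<eta> \<longleftrightarrow> \<eta> \<noteq> 0 \<and> (\<forall>x. x \<noteq> 0 \<longrightarrow> (\<exists>n::nat. x = \<eta> ^ n))"

definition Ucal :: "nat \<Rightarrow> 'a::field set" where
  "Ucal q0 = {u. (\<exists>\<eta>. primitive_elem \<eta> \<and> u = (1 + \<eta> ^ q0) / (\<eta> + \<eta> ^ q0))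
               \<and> (\<forall>X. X ^ (q0 + 1) + u * X ^ q0 + (u + 1) * X + 1 \<noteq> 0)}"

text \<open>Generalized Petersen graph GPG(n,k): vertex (False,i) is c_(i+1), (True,i) is c'_(i+1),
  for i \<in> {0..<n}; subscripts modulo n.\<close>
definition GPG_verts :: "nat \<Rightarrow> (bool \<times> int) set" where
  "GPG_verts n = UNIV \<times> {0..<int n}"

definition GPG_edge :: "nat \<Rightarrow> int \<Rightarrow> (bool \<times> int) \<Rightarrow> (bool \<times> int) \<Rightarrow> bool" where
  "GPG_edge n k v w \<longleftrightarrow> (\<exists>i\<in>{0..<int n}.
      (v = (False, i) \<and> w = (False, (i + 1) mod int n)) \<or>
      (v = (False, i) \<and> w = (True, i)) \<or>
      (v = (True, i) \<and> w = (True, (i + k) mod int n)))"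

definition GPG_adj :: "nat \<Rightarrow> int \<Rightarrow> (bool \<times> int) \<Rightarrow> (bool \<times> int) \<Rightarrow> bool" where
  "GPG_adj n k v w \<longleftrightarrow> GPG_edge n k v w \<or> GPG_edge n k w v"

definition graph_iso :: "'v set \<Rightarrow> ('v \<Rightarrow> 'v \<Rightarrow> bool) \<Rightarrow> 'w set \<Rightarrow> ('w \<Rightarrow> 'w \<Rightarrow> bool) \<Rightarrow> bool" where
  "graph_iso V E W F \<longleftrightarrow> (\<exists>\<phi>. bij_betw \<phi> V W \<and>
      (\<forall>x\<in>V. \<forall>y\<in>V. E x y \<longleftrightarrow> F (\<phi> x) (\<phi> y)))"

end

theory Submission imports Defs "HOL-Number_Theory.Residues" begin

lemma char2I: "(2::'a::comm_ring_1) = 0 \<Longrightarrow> x - y = 2 * (w::'a) \<Longrightarrow> x = y"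
proof -
  assume a: "(2::'a) = 0" "x - y = 2 * w"
  have "x - y = 0" unfolding a(2) a(1) by (rule mult_zero_left)
  then show "x = y" by (rule right_minus_eq[THEN iffD1])
qed
lemma char2_neg: "(2::'a::comm_ring_1) = 0 \<Longrightarrow> - x = (x::'a)"
proof -
  assume a: "(2::'a) = 0"
  have "x + x = 2 * x" by (rule mult_2[symmetric])
  also have "\<dots> = 0" unfolding a by (rule mult_zero_left)
  finally show "- x = x" by (rule minus_unique)
qed

lemma char2_eq: "(2::'a::comm_ring_1) = 0 \<Longrightarrow> (x + y = 0) \<longleftrightarrow> x = (y::'a)"
proof -
  assume a: "(2::'a) = 0"
  have "(x + y = 0) \<longleftrightarrow> x = - y" by (simp add: eq_neg_iff_add_eq_0)
  also have "- y = y" using a by (rule char2_neg)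
  finally show ?thesis .
qed

lemma frob2: "(2::'a::comm_ring_1) = 0 \<Longrightarrow> (x + y) ^ (2 ^ e) = x ^ (2 ^ e) + (y::'a) ^ (2 ^ e)"
proof (induction e)
  case 0 then show ?case by simp
next
  case (Suc e)
  have "(x + y) ^ (2 ^ Suc e) = ((x + y) ^ (2 ^ e)) ^ 2" by (simp add: power_mult[symmetric] mult.commute)
  also have "\<dots> = (x ^ (2 ^ e) + y ^ (2 ^ e)) ^ 2" using Suc by simp
  also have "\<dots> = (x ^ (2 ^ e)) ^ 2 + (y ^ (2 ^ e)) ^ 2 + 2 * (x ^ (2 ^ e) * y ^ (2 ^ e))"
    by (simp add: power2_eq_square algebra_simps)
  also have "\<dots> = x ^ (2 ^ Suc e) + y ^ (2 ^ Suc e)" using Suc.prems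
    by (simp add: power_mult[symmetric] mult.commute)
  finally show ?case .
qed

lemma char2_card:
  assumes "CARD('a::{field,finite}) = 2 ^ f" "f \<ge> 1"
  shows "(2::'a) = 0"
proof -
  have c: "CHAR('a) dvd CARD('a)" by (rule CHAR_dvd_CARD)
  have d: "CHAR('a) dvd 2 ^ f" using c assms(1) by (simp only:)
  have fin: "finite (UNIV :: 'a set)" by simp
  have pos: "CHAR('a) > 0" by (rule finite_imp_CHAR_pos[OF fin])
  have p: "prime CHAR('a)" by (rule prime_CHAR_semidom[OF pos])
  have d2: "CHAR('a) dvd 2" by (rule prime_dvd_power[OF p d])
  have le: "CHAR('a) \<le> 2" using d2 by (rule dvd_imp_le) simp
  have gt: "CHAR('a) > 1" using p by (rule prime_gt_1_nat)
  have eq: "CHAR('a) = 2" using le gt by linarith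
  have "of_nat CHAR('a) = (0::'a)" by (rule of_nat_CHAR)
  then have "of_nat 2 = (0::'a)" unfolding eq .
  then show ?thesis by simp
qed

lemma fermat:
  fixes x :: "'a::{field,finite}"
  assumes "x \<noteq> 0" shows "x ^ (CARD('a) - 1) = 1"
proof -
  have "(\<Prod>y\<in>UNIV-{0}. x*y) = (\<Prod>y\<in>UNIV-{0::'a}. y)"
    by (rule prod.reindex_bij_witness[of _ "\<lambda>y. y/x" "\<lambda>y. x*y"]) (use assms in auto)
  moreover have "(\<Prod>y\<in>UNIV-{0}. x*y) = x ^ card (UNIV-{0::'a}) * (\<Prod>y\<in>UNIV-{0::'a}. y)"
    by (simp add: prod.distrib)
  moreover have "(\<Prod>y\<in>UNIV-{0::'a}. y) \<noteq> 0" by simp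
  moreover have "card (UNIV-{0::'a}) = CARD('a) - 1" by (simp add: card_Diff_singleton)
  ultimately show ?thesis by simp
qed

lemma Phi_entries:
  "(Phi q0 a c :: 'a::field^3^3) $ 1 $ 0 = a" "(Phi q0 a c :: 'a::field^3^3) $ 2 $ 0 = c"
  by (simp_all add: Phi_def)

lemma Phi_inj: "(Phi q0 a c :: 'a::field^3^3) = Phi q0 a' c' \<longleftrightarrow> a = a' \<and> c = c'"
proof
  assume h: "(Phi q0 a c :: 'a::field^3^3) = Phi q0 a' c'"
  have "a = a'" using arg_cong[OF h, of "\<lambda>M. M$1$0"] by (simp add: Phi_entries)
  moreover have "c = c'" using arg_cong[OF h, of "\<lambda>M. M$2$0"] by (simp add: Phi_entries)
  ultimately show "a = a' \<and> c = c'" by simp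
qed simp

lemma Phi_mult:
  assumes "(2::'a::field) = 0" "q0 = 2 ^ e"
  shows "(Phi q0 a c :: 'a^3^3) ** Phi q0 b d = Phi q0 (a + b) (c + a ^ q0 * b + d)"
  unfolding vec_eq_iff matrix_matrix_mult_def Phi_def
  using frob2[OF assms(1), of a b e] assms(2)
  by (simp add: forall_3 sum_3 algebra_simps)

lemma matrix_inv_eqI:
  fixes A B :: "'a::comm_ring_1^'n^'n"
  assumes "A ** B = mat 1" "B ** A = mat 1"
  shows "matrix_inv A = B"
  unfolding matrix_inv_def
proof (rule some_equality)
  show "A ** B = mat 1 \<and> B ** A = mat 1" using assms by simp
next
  fix C assume "A ** C = mat 1 \<and> C ** A = mat 1"
  then have "C = C ** (A ** B)" "C ** A = mat 1" using assms by simp_all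
  then show "C = B" by (simp add: matrix_mul_assoc)
qed

lemma Phi_one: "q0 > 0 \<Longrightarrow> (Phi q0 0 0 :: 'a::field^3^3) = mat 1"
  unfolding Phi_def mat_def vec_eq_iff by simp

lemma Phi_inv:
  assumes "(2::'a::field) = 0" "q0 = 2 ^ e"
  shows "matrix_inv (Phi q0 b d :: 'a^3^3) = Phi q0 b (d + b ^ (q0 + 1))"
proof (rule matrix_inv_eqI)
  have q: "q0 > 0" using assms by simp
  have bb: "b + b = 0" using char2_eq[OF assms(1), of b b] by simp
  have "d + b ^ q0 * b + (d + b ^ (q0 + 1)) = 2 * (d + b ^ (q0 + 1))" by (simp add: algebra_simps)
  then have 1: "d + b ^ q0 * b + (d + b ^ (q0 + 1)) = 0" using assms by simp
  have "d + b ^ (q0 + 1) + b ^ q0 * b + d = 2 * (d + b ^ (q0 + 1))" by (simp add: algebra_simps)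
  then have 2: "d + b ^ (q0 + 1) + b ^ q0 * b + d = 0" using assms by simp
  have "Phi q0 b d ** Phi q0 b (d + b ^ (q0 + 1)) = Phi q0 (b + b) (d + b ^ q0 * b + (d + b ^ (q0 + 1)))"
    by (rule Phi_mult[OF assms])
  also have "\<dots> = mat 1" unfolding bb 1 by (rule Phi_one[OF q])
  finally show "Phi q0 b d ** Phi q0 b (d + b ^ (q0 + 1)) = mat 1" .
  have "Phi q0 b (d + b ^ (q0 + 1)) ** Phi q0 b d = Phi q0 (b + b) (d + b ^ (q0 + 1) + b ^ q0 * b + d)"
    by (rule Phi_mult[OF assms])
  also have "\<dots> = mat 1" unfolding bb 2 by (rule Phi_one[OF q])
  finally show "Phi q0 b (d + b ^ (q0 + 1)) ** Phi q0 b d = mat 1" .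
qed

lemma Phi_Omega: "Phi q0 a c \<in> Omega q0 t \<longleftrightarrow> a \<noteq> 0 \<and> c = t * a ^ (q0 + 1)"
  unfolding Omega_def by (auto simp: Phi_inj)

lemma Phi_K: "Phi q0 a c \<in> Kgrp q0"
  unfolding Kgrp_def by blast

lemma GPG_FF: "0 \<le> i \<Longrightarrow> i < int n \<Longrightarrow> 0 \<le> j \<Longrightarrow> j < int n \<Longrightarrow>
  GPG_adj n k (False, i) (False, j) \<longleftrightarrow> j = (i + 1) mod int n \<or> i = (j + 1) mod int n"
  by (auto simp: GPG_adj_def GPG_edge_def)

lemma GPG_TT: "0 \<le> i \<Longrightarrow> i < int n \<Longrightarrow> 0 \<le> j \<Longrightarrow> j < int n \<Longrightarrow>
  GPG_adj n k (True, i) (True, j) \<longleftrightarrow> j = (i + k) mod int n \<or> i = (j + k) mod int n"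
  by (auto simp: GPG_adj_def GPG_edge_def)

lemma GPG_FT: "0 \<le> i \<Longrightarrow> i < int n \<Longrightarrow> 0 \<le> j \<Longrightarrow> j < int n \<Longrightarrow>
  GPG_adj n k (False, i) (True, j) \<longleftrightarrow> i = j"
  by (auto simp: GPG_adj_def GPG_edge_def)

lemma GPG_TF: "0 \<le> i \<Longrightarrow> i < int n \<Longrightarrow> 0 \<le> j \<Longrightarrow> j < int n \<Longrightarrow>
  GPG_adj n k (True, i) (False, j) \<longleftrightarrow> i = j"
  by (auto simp: GPG_adj_def GPG_edge_def)

locale prim =
  fixes \<eta> :: "'a::{field,finite}" and n :: nat
  assumes prim: "primitive_elem \<eta>" and n_def: "n = CARD('a) - 1"
begin


lemma eta_nz: "\<eta> \<noteq> 0" using prim unfolding primitive_elem_def by blast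

lemma card_ge2: "CARD('a) \<ge> 2"
proof -
  have "card {0::'a, 1} = 2" by simp
  moreover have "card {0::'a, 1} \<le> CARD('a)" by (rule card_mono) auto
  ultimately show ?thesis by simp
qed

lemma nn_pos: "n > 0" using card_ge2 n_def by simp

lemma pow_nn: "\<eta> ^ n = 1" using fermat eta_nz n_def by blast

lemma pow_mod: "\<eta> ^ m = \<eta> ^ (m mod n)"
proof -
  have "\<eta> ^ m = \<eta> ^ (n * (m div n) + m mod n)" by simp
  also have "\<dots> = (\<eta> ^ n) ^ (m div n) * \<eta> ^ (m mod n)" by (simp only: power_add power_mult)
  finally show ?thesis using pow_nn by simp
qed

lemma pow_image: "(\<lambda>i. \<eta> ^ i) ` {..<n} = UNIV - {0}"
proof
  show "(\<lambda>i. \<eta> ^ i) ` {..<n} \<subseteq> UNIV - {0}" using eta_nz by auto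
  show "UNIV - {0} \<subseteq> (\<lambda>i. \<eta> ^ i) ` {..<n}"
  proof
    fix x :: 'a assume "x \<in> UNIV - {0}"
    then obtain m where "x = \<eta> ^ m" using prim unfolding primitive_elem_def by blast
    then have "x = \<eta> ^ (m mod n)" using pow_mod by simp
    moreover have "m mod n < n" using nn_pos by simp
    ultimately show "x \<in> (\<lambda>i. \<eta> ^ i) ` {..<n}" by blast
  qed
qed

lemma pow_inj_on: "inj_on (\<lambda>i. \<eta> ^ i) {..<n}"
proof (rule eq_card_imp_inj_on)
  show "finite {..<n}" by simp
  have "card (UNIV - {0::'a}) = n" by (simp add: card_Diff_singleton n_def)
  then show "card ((\<lambda>i. \<eta> ^ i) ` {..<n}) = card {..<n}" using pow_image by simp
qed

lemma powi_nat: "\<eta> powi i = \<eta> ^ nat (i mod int n)"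
proof -
  have "i = (i mod int n) + int n * (i div int n)" by simp
  then have "\<eta> powi i = \<eta> powi (i mod int n) * \<eta> powi (int n * (i div int n))"
    by (metis power_int_add eta_nz)
  also have "\<eta> powi (int n * (i div int n)) = 1"
    by (simp add: power_int_mult pow_nn power_int_of_nat)
  also have "\<eta> powi (i mod int n) = \<eta> ^ nat (i mod int n)"
    using nn_pos by (metis power_int_of_nat int_nat_eq pos_mod_sign of_nat_0_less_iff)
  finally show ?thesis by simp
qed

lemma E_eq: "\<eta> powi i = \<eta> powi j \<longleftrightarrow> i mod int n = j mod int n"
proof
  assume "\<eta> powi i = \<eta> powi j"
  then have "\<eta> ^ nat (i mod int n) = \<eta> ^ nat (j mod int n)" by (simp add: powi_nat)
  moreover have "nat (i mod int n) \<in> {..<n}" "nat (j mod int n) \<in> {..<n}"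
    using nn_pos by (auto simp: nat_less_iff)
  ultimately have "nat (i mod int n) = nat (j mod int n)" using pow_inj_on by (meson inj_onD)
  then show "i mod int n = j mod int n" using nn_pos by (simp add: eq_nat_nat_iff)
next
  assume "i mod int n = j mod int n"
  then show "\<eta> powi i = \<eta> powi j" by (simp add: powi_nat)
qed

lemma E_nz: "\<eta> powi i \<noteq> 0" using eta_nz by simp

lemma E_add: "\<eta> powi (i + j) = \<eta> powi i * \<eta> powi j" using eta_nz by (simp add: power_int_add)

lemma E_surj: "x \<noteq> 0 \<Longrightarrow> \<exists>i. 0 \<le> i \<and> i < int n \<and> \<eta> powi i = x"
proof -
  assume "x \<noteq> 0"
  then obtain m where "x = \<eta> ^ m" using prim unfolding primitive_elem_def by blast
  moreover have "\<eta> powi (int m mod int n) = \<eta> ^ m"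
    by (simp add: powi_nat pow_mod[of m] flip: of_nat_mod)
  ultimately have "x = \<eta> powi (int m mod int n)" by simp
  then show ?thesis using nn_pos by (intro exI[of _ "int m mod int n"]) auto
qed

definition L where "L x = (THE i. 0 \<le> i \<and> i < int n \<and> \<eta> powi i = x)"

lemma range_eq: "0 \<le> i \<Longrightarrow> i < int n \<Longrightarrow> 0 \<le> j \<Longrightarrow> j < int n \<Longrightarrow> \<eta> powi i = \<eta> powi j \<Longrightarrow> i = j"
  using E_eq by simp

lemma L_prop: "x \<noteq> 0 \<Longrightarrow> 0 \<le> L x \<and> L x < int n \<and> \<eta> powi (L x) = x"
  unfolding L_def by (rule theI') (use E_surj range_eq in blast)

lemma L_unique: "0 \<le> i \<Longrightarrow> i < int n \<Longrightarrow> L (\<eta> powi i) = i"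
  using L_prop[OF E_nz[of i]] range_eq by blast

lemma L_eq_iff: "x \<noteq> 0 \<Longrightarrow> y \<noteq> 0 \<Longrightarrow> L x = L y \<longleftrightarrow> x = y"
  using L_prop by metis

lemma mod_shift: "0 \<le> i \<Longrightarrow> i < int n \<Longrightarrow> 0 \<le> j \<Longrightarrow> j < int n \<Longrightarrow>
   j = (i + c) mod int n \<longleftrightarrow> \<eta> powi j = \<eta> powi i * \<eta> powi c"
  by (simp add: E_add[symmetric] E_eq)

lemma pow_coprime_inj:
  fixes x y :: 'a
  assumes "coprime n m" "x \<noteq> 0" "y \<noteq> 0" "x ^ m = y ^ m"
  shows "x = y"
proof -
  define z where "z = x / y"
  have "z \<noteq> 0" using assms z_def by simp
  then obtain i where i: "\<eta> powi i = z" using L_prop by blast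
  have "z ^ m = 1" using assms by (simp add: z_def power_divide)
  then have "\<eta> powi (i * int m) = \<eta> powi 0" using i eta_nz by (simp add: power_int_mult)
  then have "(i * int m) mod int n = 0" using E_eq[of "i * int m" 0] by simp
  then have "int n dvd i * int m" by presburger
  moreover have "coprime (int n) (int m)" using assms(1) by simp
  ultimately have "int n dvd i" using coprime_dvd_mult_left_iff by blast
  then have "\<eta> powi i = \<eta> powi 0" using E_eq[of i 0] by (simp add: dvd_eq_mod_eq_0)
  then have "z = 1" using i by simp
  then show ?thesis using assms z_def by simp
qed


end

lemma id_C1:
  fixes u a b A B :: "'a::comm_ring_1"
  assumes "(2::'a) = 0"
  shows "(u)*A*a + A*b + ((u)*B*b + B*b) - (u+1)*(A+B)*(a+b) = u*A*(a+b) + (u+1)*(A+B)*a"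
  by (rule char2I[OF assms, where w="(-1)*A*b*u + (-1)*B*a*u + (-1)*A*a + (-1)*B*a + (-1)*A*a*u"]) (simp add: algebra_simps)

lemma id_S2:
  fixes u a b A B :: "'a::comm_ring_1"
  assumes "(2::'a) = 0"
  shows "(u)*A*a + A*b + ((u)*B*b + B*b) - (u)*(A+B)*(a+b) = (u)*B*b + B*a + ((u)*A*a + A*a) - (u+1)*(B+A)*(b+a)"
  by (rule char2I[OF assms, where w="A*b + B*b"]) (simp add: algebra_simps)

lemma id_C3:
  fixes u a b A B :: "'a::comm_ring_1"
  assumes "(2::'a) = 0"
  shows "(u+1)*A*a + A*b + ((u+1)*B*b + B*b) - (u)*(A+B)*(a+b) = (u+1)*A*(a+b) + u*(A+B)*a"
  by (rule char2I[OF assms, where w="B*b + (-1)*A*b*u + (-1)*B*a*u + (-1)*A*a*u"]) (simp add: algebra_simps)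

lemma id_S4:
  fixes u a b A B :: "'a::comm_ring_1"
  assumes "(2::'a) = 0"
  shows "(u+1)*A*a + A*b + ((u+1)*B*b + B*b) - (u+1)*(A+B)*(a+b) = (u+1)*B*b + B*a + ((u+1)*A*a + A*a) - (u)*(B+A)*(b+a)"
  by (rule char2I[OF assms, where w="(-1)*B*a + (-1)*A*a"]) (simp add: algebra_simps)

lemma id_C5:
  fixes u a b A B :: "'a::comm_ring_1"
  assumes "(2::'a) = 0"
  shows "(u)*A*a + A*b + ((u+1)*B*b + B*b) - (u)*(A+B)*(a+b) = (u+1)*A*b + u*B*a"
  by (rule char2I[OF assms, where w="B*b + (-1)*A*b*u + (-1)*B*a*u"]) (simp add: algebra_simps)

lemma id_S8:
  fixes u a b A B :: "'a::comm_ring_1"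
  assumes "(2::'a) = 0"
  shows "(u+1)*A*a + A*b + ((u)*B*b + B*b) - (u+1)*(A+B)*(a+b) = (u)*B*b + B*a + ((u+1)*A*a + A*a) - (u)*(B+A)*(b+a)"
  by (rule char2I[OF assms, where w="(-1)*B*a + (-1)*A*a"]) (simp add: algebra_simps)

lemma id_C6:
  fixes u a b A B :: "'a::comm_ring_1"
  assumes "(2::'a) = 0"
  shows "(u)*A*a + A*b + ((u+1)*B*b + B*b) - (u+1)*(A+B)*(a+b) = A*a + u*A*b + (u+1)*B*a + B*b"
  by (rule char2I[OF assms, where w="(-1)*A*b*u + (-1)*B*a*u + (-1)*A*a + (-1)*B*a"]) (simp add: algebra_simps)

lemma id_S7:
  fixes u a b A B :: "'a::comm_ring_1"
  assumes "(2::'a) = 0"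
  shows "(u+1)*A*a + A*b + ((u)*B*b + B*b) - (u)*(A+B)*(a+b) = (u)*B*b + B*a + ((u+1)*A*a + A*a) - (u+1)*(B+A)*(b+a)"
  by (rule char2I[OF assms, where w="A*b + B*b"]) (simp add: algebra_simps)


definition ee :: "nat \<Rightarrow> 'a::field \<Rightarrow> 'a \<Rightarrow> 'a \<Rightarrow> 'a \<Rightarrow> 'a \<Rightarrow> 'a" where
  "ee q0 v w t a b = v * a ^ (q0 + 1) + a ^ q0 * b + (w * b ^ (q0 + 1) + b ^ (q0 + 1)) - t * (a + b) ^ (q0 + 1)"

locale cfg = prim +
  fixes q0 e :: nat and u P Pq D :: 'a
  assumes two: "(2::'a) = 0" and q0_def: "q0 = 2 ^ e" and cop: "coprime n (q0 - 1)"
    and P_def: "P = 1 + \<eta>" and Pq_def: "Pq = P ^ q0" and Dnz: "D \<noteq> 0" and Pnz: "P \<noteq> 0"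
    and Du: "D * u = Pq" and Du1: "D * (u + 1) = P"
    and U2: "\<And>X. X ^ (q0 + 1) + u * X ^ q0 + (u + 1) * X + 1 \<noteq> 0"
    and eta1: "\<eta> \<noteq> 1"
begin

lemma q0_pos: "q0 > 0" using q0_def by simp

lemma frob: fixes x y :: 'a shows "(x + y) ^ q0 = x ^ q0 + y ^ q0" using frob2[OF two, of x y e] q0_def by simp

lemma Pq_nz: "Pq \<noteq> 0" using Pnz Pq_def by simp

lemma inj_iff:
  fixes x y :: 'a
  assumes "x \<noteq> 0" "y \<noteq> 0" shows "x ^ q0 * y = y ^ q0 * x \<longleftrightarrow> x = y"
proof
  assume h: "x ^ q0 * y = y ^ q0 * x"
  have "x ^ q0 = x ^ (q0 - 1) * x" "y ^ q0 = y ^ (q0 - 1) * y"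
    using q0_pos by (metis power_minus_mult)+
  then have "x ^ (q0 - 1) * (x * y) = y ^ (q0 - 1) * (x * y)" using h by (simp add: ac_simps)
  then have "x ^ (q0 - 1) = y ^ (q0 - 1)" using assms by simp
  then show "x = y" using pow_coprime_inj[OF cop assms] by blast
qed simp

lemma inj0:
  fixes d y :: 'a
  assumes "y \<noteq> 0" shows "d ^ q0 * y = y ^ q0 * d \<longleftrightarrow> d = 0 \<or> d = y"
  using inj_iff[OF _ assms, of d] q0_pos by (cases "d = 0") auto

lemma ee_exp: fixes v w t a b :: 'a shows "ee q0 v w t a b = v * (a ^ q0) * a + (a ^ q0) * b + (w * (b ^ q0) * b + (b ^ q0) * b) - t * ((a ^ q0) + (b ^ q0)) * (a + b)"
proof -
  have "(a + b) ^ (q0 + 1) = (a ^ q0 + b ^ q0) * (a + b)" using frob[of a b] by simp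
  then show ?thesis unfolding ee_def by (simp add: algebra_simps)
qed

lemma helper1: "Pq*(a^q0)*d = P*(d^q0)*a \<longleftrightarrow> d^q0*(a*P) = (a*P)^q0*d"
  by (auto simp: power_mult_distrib Pq_def ac_simps)

lemma helper3: "P*(a^q0)*d = Pq*(d^q0)*a \<longleftrightarrow> d^q0*(a/P) = (a/P)^q0*d"
proof -
  have e1: "(a/P)^q0 * d * (P*Pq) = P*(a^q0)*d" using Pnz Pq_nz by (simp add: power_divide Pq_def field_simps)
  have e2: "d^q0*(a/P)*(P*Pq) = Pq*(d^q0)*a" using Pnz by (simp add: field_simps)
  have "d^q0*(a/P) = (a/P)^q0*d \<longleftrightarrow> d^q0*(a/P)*(P*Pq) = (a/P)^q0 * d * (P*Pq)"
    by (rule mult_right_cancel[symmetric]) (use Pnz Pq_nz in simp)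
  then show ?thesis using e1 e2 by auto
qed

lemma mulD: "x = y \<longleftrightarrow> D * x = D * y" using Dnz by simp

lemma case1:
  assumes "a \<noteq> 0" "b \<noteq> 0" shows "ee q0 u u (u+1) a b = 0 \<longleftrightarrow> a = b \<or> b = a * \<eta>"
proof -
  define d where "d = a + b"
  have "ee q0 u u (u+1) a b = u*(a^q0)*d + (u+1)*(d^q0)*a"
    unfolding ee_exp d_def frob by (rule id_C1[OF two])
  also have "\<dots> = 0 \<longleftrightarrow> u*(a^q0)*d = (u+1)*(d^q0)*a" by (rule char2_eq[OF two])
  also have "\<dots> \<longleftrightarrow> Pq*(a^q0)*d = P*(d^q0)*a"
    by (subst mulD) (simp add: Du[symmetric] Du1[symmetric] mult.assoc)
  also have "\<dots> \<longleftrightarrow> d = 0 \<or> d = a*P" unfolding helper1 using inj0[of "a*P" d] assms Pnz by simp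
  also have "\<dots> \<longleftrightarrow> a = b \<or> b = a * \<eta>"
    unfolding d_def P_def using char2_eq[OF two, of a b] by (auto simp: algebra_simps)
  finally show ?thesis .
qed

lemma case2:
  assumes "a \<noteq> 0" "b \<noteq> 0" shows "ee q0 u u u a b = 0 \<longleftrightarrow> a = b \<or> a = b * \<eta>"
proof -
  have "ee q0 u u u a b = ee q0 u u (u+1) b a" unfolding ee_exp by (rule id_S2[OF two])
  then show ?thesis using case1[of b a] assms by auto
qed

lemma case3:
  assumes "a \<noteq> 0" "b \<noteq> 0" shows "ee q0 (u+1) (u+1) u a b = 0 \<longleftrightarrow> a = b \<or> b * P = a * \<eta>"
proof -
  define d where "d = a + b"
  have "ee q0 (u+1) (u+1) u a b = (u+1)*(a^q0)*d + u*(d^q0)*a"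
    unfolding ee_exp d_def frob by (rule id_C3[OF two])
  also have "\<dots> = 0 \<longleftrightarrow> (u+1)*(a^q0)*d = u*(d^q0)*a" by (rule char2_eq[OF two])
  also have "\<dots> \<longleftrightarrow> P*(a^q0)*d = Pq*(d^q0)*a"
    by (subst mulD) (simp add: Du[symmetric] Du1[symmetric] mult.assoc)
  also have "\<dots> \<longleftrightarrow> d = 0 \<or> d = a/P" unfolding helper3 using inj0[of "a/P" d] assms Pnz by simp
  also have "\<dots> \<longleftrightarrow> a = b \<or> b * P = a * \<eta>"
  proof -
    have "d = 0 \<longleftrightarrow> a = b" unfolding d_def by (rule char2_eq[OF two])
    moreover have "d = a/P \<longleftrightarrow> b * P = a * \<eta>"
    proof -
      have "d = a/P \<longleftrightarrow> a*P + b*P = a" unfolding d_def using Pnz by (auto simp: field_simps)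
      also have "\<dots> \<longleftrightarrow> b*P = a - a*P" by (auto simp: algebra_simps)
      also have "a - a*P = - (a*\<eta>)" unfolding P_def by (simp add: algebra_simps)
      also have "- (a*\<eta>) = a*\<eta>" by (rule char2_neg[OF two])
      finally show ?thesis .
    qed
    ultimately show ?thesis by simp
  qed
  finally show ?thesis .
qed

lemma case4:
  assumes "a \<noteq> 0" "b \<noteq> 0" shows "ee q0 (u+1) (u+1) (u+1) a b = 0 \<longleftrightarrow> a = b \<or> a * P = b * \<eta>"
proof -
  have "ee q0 (u+1) (u+1) (u+1) a b = ee q0 (u+1) (u+1) u b a" unfolding ee_exp by (rule id_S4[OF two])
  then show ?thesis using case3[of b a] assms by auto
qed

lemma case5:
  assumes "a \<noteq> 0" "b \<noteq> 0" shows "ee q0 u (u+1) u a b = 0 \<longleftrightarrow> b * P = a"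
proof -
  have "ee q0 u (u+1) u a b = (u+1)*(a^q0)*b + u*(b^q0)*a"
    unfolding ee_exp by (rule id_C5[OF two])
  also have "\<dots> = 0 \<longleftrightarrow> (u+1)*(a^q0)*b = u*(b^q0)*a" by (rule char2_eq[OF two])
  also have "\<dots> \<longleftrightarrow> P*(a^q0)*b = Pq*(b^q0)*a"
    by (subst mulD) (simp add: Du[symmetric] Du1[symmetric] mult.assoc)
  also have "\<dots> \<longleftrightarrow> b = a/P" unfolding helper3 using inj_iff[of b "a/P"] assms Pnz by simp
  also have "\<dots> \<longleftrightarrow> b * P = a" using Pnz by (auto simp: field_simps)
  finally show ?thesis .
qed

lemma case8:
  assumes "a \<noteq> 0" "b \<noteq> 0" shows "ee q0 (u+1) u (u+1) a b = 0 \<longleftrightarrow> a * P = b"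
proof -
  have "ee q0 (u+1) u (u+1) a b = ee q0 u (u+1) u b a" unfolding ee_exp by (rule id_S8[OF two])
  then show ?thesis using case5[of b a] assms by auto
qed

lemma case6:
  assumes "a \<noteq> 0" "b \<noteq> 0" shows "ee q0 u (u+1) (u+1) a b \<noteq> 0"
proof -
  define X where "X = a / b"
  have a: "a = X * b" using assms X_def by simp
  have "ee q0 u (u+1) (u+1) a b = (a^q0)*a + u*(a^q0)*b + (u+1)*(b^q0)*a + (b^q0)*b"
    unfolding ee_exp by (rule id_C6[OF two])
  also have "\<dots> = (b^q0*b) * (X^(q0+1) + u*X^q0 + (u+1)*X + 1)"
    unfolding a by (simp add: power_mult_distrib power_add algebra_simps)
  finally show ?thesis using assms U2[of X] by simp
qed

lemma case7:
  assumes "a \<noteq> 0" "b \<noteq> 0" shows "ee q0 (u+1) u u a b \<noteq> 0"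
proof -
  have "ee q0 (u+1) u u a b = ee q0 u (u+1) (u+1) b a" unfolding ee_exp by (rule id_S7[OF two])
  then show ?thesis using case6[of b a] assms by auto
qed


lemma Gamma_Phi:
  fixes a b v w :: 'a
  assumes "a \<noteq> 0" "b \<noteq> 0"
  shows "Gamma_adj q0 u (Phi q0 a (v * a^(q0+1))) (Phi q0 b (w*b^(q0+1))) \<longleftrightarrow>
     a \<noteq> b \<and> (ee q0 v w u a b = 0 \<or> ee q0 v w (u+1) a b = 0)"
proof -
  have m: "Phi q0 a (v * a^(q0+1)) ** matrix_inv (Phi q0 b (w*b^(q0+1))) =
     Phi q0 (a+b) (v * a^(q0+1) + a^q0*b + (w*b^(q0+1) + b^(q0+1)))"
    by (simp add: Phi_inv[OF two q0_def] Phi_mult[OF two q0_def])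
  have ab: "a + b \<noteq> 0 \<longleftrightarrow> a \<noteq> b" using char2_eq[OF two, of a b] by simp
  show ?thesis unfolding Gamma_adj_def m using ab
    by (auto simp add: Phi_K Phi_Omega ee_def)
qed

definition phi :: "'a^3^3 \<Rightarrow> bool \<times> int" where
  "phi x = (if x \<in> Omega q0 u then (False, L (x$1$0)) else (True, L (x$1$0 * P)))"

definition psi :: "bool \<times> int \<Rightarrow> 'a^3^3" where
  "psi z = (if fst z then Phi q0 (\<eta> powi (snd z) / P) ((u+1)*(\<eta> powi (snd z) / P)^(q0+1))
            else Phi q0 (\<eta> powi (snd z)) (u*(\<eta> powi (snd z))^(q0+1)))"

lemma not_Omega_u: "a \<noteq> 0 \<Longrightarrow> Phi q0 a ((u+1)*a^(q0+1)) \<notin> Omega q0 u"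
  by (simp add: Phi_Omega algebra_simps)

lemma phi_u: "a \<noteq> 0 \<Longrightarrow> phi (Phi q0 a (u*a^(q0+1))) = (False, L a)"
  by (simp add: phi_def Phi_Omega Phi_entries)

lemma phi_u1: "a \<noteq> 0 \<Longrightarrow> phi (Phi q0 a ((u+1)*a^(q0+1))) = (True, L (a * P))"
  using not_Omega_u by (simp add: phi_def Phi_entries)

lemma vertex_cases:
  assumes "x \<in> Omega q0 u \<union> Omega q0 (u+1)"
  obtains a where "a \<noteq> 0" "x = Phi q0 a (u*a^(q0+1))"
  | a where "a \<noteq> 0" "x = Phi q0 a ((u+1)*a^(q0+1))"
  using assms unfolding Omega_def by blast

lemma L_range: "a \<noteq> 0 \<Longrightarrow> 0 \<le> L a \<and> L a < int n" using L_prop by blast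

lemma adj_iff:
  assumes k: "\<eta> powi (k + 1) = P"
    and x: "x \<in> Omega q0 u \<union> Omega q0 (u+1)" and y: "y \<in> Omega q0 u \<union> Omega q0 (u+1)"
  shows "Gamma_adj q0 u x y \<longleftrightarrow> GPG_adj n k (phi x) (phi y)"
proof -
  have etaz: "\<eta> \<noteq> 0" by (rule eta_nz)
  have kP: "\<eta> powi k * \<eta> = P" using k E_add[of k 1] by simp
  have Ls: "\<And>a. a \<noteq> 0 \<Longrightarrow> \<eta> powi (L a) = a" using L_prop by blast
  show ?thesis
  proof (cases rule: vertex_cases[OF x])
    case xa: (1 a)
    show ?thesis
    proof (cases rule: vertex_cases[OF y])
      case yb: (1 b)
      have "Gamma_adj q0 u x y \<longleftrightarrow> a = b * \<eta> \<or> b = a * \<eta>"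
        using xa yb Gamma_Phi case1 case2 eta1 by auto
      moreover have "GPG_adj n k (phi x) (phi y) \<longleftrightarrow> b = a * \<eta> \<or> a = b * \<eta>"
      proof -
        have px: "phi x = (False, L a)" unfolding xa(2) by (rule phi_u[OF xa(1)])
        have py: "phi y = (False, L b)" unfolding yb(2) by (rule phi_u[OF yb(1)])
        show ?thesis unfolding px py using L_range[OF xa(1)] L_range[OF yb(1)]
          by (simp add: GPG_FF mod_shift Ls xa(1) yb(1))
      qed
      ultimately show ?thesis by blast
    next
      case yb: (2 b)
      have "Gamma_adj q0 u x y \<longleftrightarrow> b * P = a"
        using xa yb Gamma_Phi case5 case6 P_def etaz by auto
      moreover have "GPG_adj n k (phi x) (phi y) \<longleftrightarrow> a = b * P"
      proof -
        have px: "phi x = (False, L a)" unfolding xa(2) by (rule phi_u[OF xa(1)])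
        have py: "phi y = (True, L (b * P))" unfolding yb(2) by (rule phi_u1[OF yb(1)])
        have bP: "b * P \<noteq> 0" using yb(1) Pnz by simp
        show ?thesis unfolding px py using L_range[OF xa(1)] L_range[OF bP]
          by (simp add: GPG_FT L_eq_iff[OF xa(1) bP])
      qed
      ultimately show ?thesis by auto
    qed
  next
    case xa: (2 a)
    show ?thesis
    proof (cases rule: vertex_cases[OF y])
      case yb: (1 b)
      have "Gamma_adj q0 u x y \<longleftrightarrow> a * P = b"
        using xa yb Gamma_Phi case7 case8 P_def etaz by auto
      moreover have "GPG_adj n k (phi x) (phi y) \<longleftrightarrow> a * P = b"
      proof -
        have px: "phi x = (True, L (a * P))" unfolding xa(2) by (rule phi_u1[OF xa(1)])
        have py: "phi y = (False, L b)" unfolding yb(2) by (rule phi_u[OF yb(1)])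
        have aP: "a * P \<noteq> 0" using xa(1) Pnz by simp
        show ?thesis unfolding px py using L_range[OF aP] L_range[OF yb(1)]
          by (simp add: GPG_TF L_eq_iff[OF aP yb(1)])
      qed
      ultimately show ?thesis by auto
    next
      case yb: (2 b)
      have PE: "P \<noteq> \<eta>" using P_def by simp
      have "Gamma_adj q0 u x y \<longleftrightarrow> b * P = a * \<eta> \<or> a * P = b * \<eta>"
        using xa yb Gamma_Phi case3 case4 PE by auto
      moreover have "GPG_adj n k (phi x) (phi y) \<longleftrightarrow> b * P = a * P * \<eta> powi k \<or> a * P = b * P * \<eta> powi k"
      proof -
        have px: "phi x = (True, L (a * P))" unfolding xa(2) by (rule phi_u1[OF xa(1)])
        have py: "phi y = (True, L (b * P))" unfolding yb(2) by (rule phi_u1[OF yb(1)])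
        have aP: "a * P \<noteq> 0" using xa(1) Pnz by simp
        have bP: "b * P \<noteq> 0" using yb(1) Pnz by simp
        show ?thesis unfolding px py using L_range[OF aP] L_range[OF bP]
          by (simp add: GPG_TT mod_shift Ls[OF aP] Ls[OF bP])
      qed
      moreover have "b * P = a * P * \<eta> powi k \<longleftrightarrow> b * \<eta> = a * P"
      proof -
        have "b * P = a * P * \<eta> powi k \<longleftrightarrow> b * P * \<eta> = a * P * (\<eta> powi k * \<eta>)"
          using etaz by (auto simp: ac_simps)
        also have "\<dots> \<longleftrightarrow> b * \<eta> = a * P" using kP Pnz by (auto simp: ac_simps)
        finally show ?thesis .
      qed
      moreover have "a * P = b * P * \<eta> powi k \<longleftrightarrow> a * \<eta> = b * P"
      proof -
        have "a * P = b * P * \<eta> powi k \<longleftrightarrow> a * P * \<eta> = b * P * (\<eta> powi k * \<eta>)"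
          using etaz by (auto simp: ac_simps)
        also have "\<dots> \<longleftrightarrow> a * \<eta> = b * P" using kP Pnz by (auto simp: ac_simps)
        finally show ?thesis .
      qed
      ultimately show ?thesis by auto
    qed
  qed
qed

lemma bij_phi: "bij_betw phi (Omega q0 u \<union> Omega q0 (u+1)) (UNIV \<times> {0..<int n})"
proof (rule bij_betw_byWitness[where f'=psi])
  show "\<forall>x\<in>Omega q0 u \<union> Omega q0 (u+1). psi (phi x) = x"
  proof
    fix x assume x: "x \<in> Omega q0 u \<union> Omega q0 (u+1)"
    show "psi (phi x) = x"
    proof (cases rule: vertex_cases[OF x])
      case (1 a)
      have px: "phi x = (False, L a)" unfolding 1(2) by (rule phi_u[OF 1(1)])
      have e: "\<eta> powi (L a) = a" using L_prop[OF 1(1)] by blast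
      show ?thesis unfolding px psi_def fst_conv snd_conv if_True if_False e using 1(2) by simp
    next
      case (2 a)
      have px: "phi x = (True, L (a * P))" unfolding 2(2) by (rule phi_u1[OF 2(1)])
      have aP: "a * P \<noteq> 0" using 2(1) Pnz by simp
      have e: "\<eta> powi (L (a * P)) / P = a" using L_prop[OF aP] Pnz by simp
      show ?thesis unfolding px psi_def fst_conv snd_conv if_True if_False e using 2(2) by simp
    qed
  qed
  show "\<forall>z\<in>UNIV \<times> {0..<int n}. phi (psi z) = z"
  proof
    fix z :: "bool \<times> int" assume z: "z \<in> UNIV \<times> {0..<int n}"
    obtain c i where zi: "z = (c, i)" by fastforce
    have i: "0 \<le> i" "i < int n" using z zi by auto
    show "phi (psi z) = z"
    proof (cases c)
      case True
      define c' where "c' = \<eta> powi i / P"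
      have nz: "c' \<noteq> 0" using Pnz E_nz[of i] c'_def by simp
      have ps: "psi z = Phi q0 c' ((u+1)*c'^(q0+1))" unfolding psi_def zi c'_def using True by simp
      have cP: "c' * P = \<eta> powi i" using Pnz c'_def by simp
      show ?thesis unfolding ps phi_u1[OF nz] cP L_unique[OF i] using zi True by simp
    next
      case False
      have ps: "psi z = Phi q0 (\<eta> powi i) (u*(\<eta> powi i)^(q0+1))" unfolding psi_def zi using False by simp
      show ?thesis unfolding ps phi_u[OF E_nz] L_unique[OF i] using zi False by simp
    qed
  qed
  show "phi ` (Omega q0 u \<union> Omega q0 (u+1)) \<subseteq> UNIV \<times> {0..<int n}"
  proof
    fix z assume "z \<in> phi ` (Omega q0 u \<union> Omega q0 (u+1))"
    then obtain x where x: "x \<in> Omega q0 u \<union> Omega q0 (u+1)" "z = phi x" by blast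
    show "z \<in> UNIV \<times> {0..<int n}"
    proof (cases rule: vertex_cases[OF x(1)])
      case (1 a)
      have px: "phi x = (False, L a)" unfolding 1(2) by (rule phi_u[OF 1(1)])
      show ?thesis using L_range[OF 1(1)] unfolding x(2) px by simp
    next
      case (2 a)
      have px: "phi x = (True, L (a * P))" unfolding 2(2) by (rule phi_u1[OF 2(1)])
      have aP: "a * P \<noteq> 0" using 2(1) Pnz by simp
      show ?thesis using L_range[OF aP] unfolding x(2) px by simp
    qed
  qed
  show "psi ` (UNIV \<times> {0..<int n}) \<subseteq> Omega q0 u \<union> Omega q0 (u+1)"
  proof
    fix x assume "x \<in> psi ` (UNIV \<times> {0..<int n})"
    then obtain c i where x: "x = psi (c, i)" by auto
    show "x \<in> Omega q0 u \<union> Omega q0 (u+1)"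
    proof (cases c)
      case True
      have nz: "\<eta> powi i / P \<noteq> 0" using Pnz E_nz[of i] by simp
      have "x = Phi q0 (\<eta> powi i / P) ((u+1) * (\<eta> powi i / P) ^ (q0+1))"
        unfolding x psi_def using True by simp
      then have "x \<in> Omega q0 (u+1)" unfolding Omega_def using nz by blast
      then show ?thesis by blast
    next
      case False
      have "x = Phi q0 (\<eta> powi i) (u * (\<eta> powi i) ^ (q0+1))"
        unfolding x psi_def using False by simp
      then have "x \<in> Omega q0 u" unfolding Omega_def using E_nz[of i] by blast
      then show ?thesis by blast
    qed
  qed
qed

end


theorem proposition6p3:
  fixes u \<eta> :: "'a::{field,finite}" and f q0 :: nat and k :: int
  assumes "CARD('a) = 2 ^ f" and "f \<ge> 4"
    and "\<exists>e. q0 = 2 ^ e" and "q0 < CARD('a)"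
    and "gcd (CARD('a) - 1) (q0 ^ 2 - 1) = 1"
    and "u \<in> Ucal q0"
    and "primitive_elem \<eta>" and "u = (1 + \<eta> ^ q0) / (\<eta> + \<eta> ^ q0)"
    and "1 + \<eta> = \<eta> powi (k + 1)"
  shows "graph_iso (Omega q0 u \<union> Omega q0 (u + 1)) (Gamma_adj q0 u)
           (GPG_verts (CARD('a) - 1)) (GPG_adj (CARD('a) - 1) k)"
proof -
  define n where "n = CARD('a) - 1"
  have two: "(2::'a) = 0" using char2_card[of f] assms(1,2) by simp
  obtain e where q0e: "q0 = 2 ^ e" using assms(3) by blast
  interpret prim \<eta> n using assms(7) n_def by unfold_locales
  have q0pos: "q0 > 0" using q0e by simp
  have cop: "coprime n (q0 - 1)"
  proof -
    have "q0 ^ 2 - 1 = (q0 - 1) * (q0 + 1)" using q0pos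
      by (cases q0) (simp_all add: power2_eq_square algebra_simps)
    then have "coprime n ((q0 - 1) * (q0 + 1))" using assms(5) n_def by (simp add: coprime_iff_gcd_eq_1)
    then show ?thesis by (rule coprime_mult_right_iff[THEN iffD1, THEN conjunct1])
  qed
  have card16: "CARD('a) \<ge> 16"
  proof -
    have "(2::nat) ^ 4 \<le> 2 ^ f" using assms(2) by (rule power_increasing) simp
    then show ?thesis using assms(1) by simp
  qed
  have eta1: "\<eta> \<noteq> 1"
  proof
    assume h: "\<eta> = 1"
    have "\<not> (UNIV \<subseteq> {0::'a, 1})"
    proof
      assume "UNIV \<subseteq> {0::'a, 1}"
      then have "CARD('a) \<le> card {0::'a, 1}" by (rule card_mono[rotated]) simp
      also have "\<dots> \<le> 2" by (simp add: card_insert_le_m1)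
      finally show False using card16 by simp
    qed
    then obtain x :: 'a where x: "x \<noteq> 0" "x \<noteq> 1" by blast
    then obtain m where "x = \<eta> ^ m" using assms(7) unfolding primitive_elem_def by blast
    then show False using h x by simp
  qed
  define P where "P = 1 + \<eta>"
  have Pnz: "P \<noteq> 0" using char2_eq[OF two, of 1 \<eta>] eta1 P_def by auto
  define Pq where "Pq = P ^ q0"
  have Pq': "Pq = 1 + \<eta> ^ q0" using frob2[OF two, of 1 \<eta> e] q0e P_def Pq_def by simp
  define D where "D = \<eta> + \<eta> ^ q0"
  have Dnz: "D \<noteq> 0"
  proof
    assume "D = 0"
    then have "\<eta> = \<eta> ^ q0" using char2_eq[OF two] D_def by simp
    moreover have "\<eta> ^ q0 = \<eta> ^ (q0 - 1) * \<eta>" using q0pos by (metis power_minus_mult)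
    ultimately have "\<eta> ^ (q0 - 1) = 1 ^ (q0 - 1)" using eta_nz by simp
    then have "\<eta> = 1" using pow_coprime_inj[OF cop eta_nz one_neq_zero] by blast
    then show False using eta1 by simp
  qed
  have Du: "D * u = Pq" using Dnz assms(8) Pq' D_def by simp
  have Du1: "D * (u + 1) = P"
  proof -
    have "Pq + D = P" by (rule char2I[OF two, where w="\<eta> ^ q0"]) (simp add: Pq' D_def P_def algebra_simps)
    then show ?thesis using Du by (simp add: algebra_simps)
  qed
  have U2: "\<And>X. X ^ (q0 + 1) + u * X ^ q0 + (u + 1) * X + 1 \<noteq> 0"
    using assms(6) unfolding Ucal_def by blast
  interpret cfg \<eta> n q0 e u P Pq D
    by (intro cfg.intro cfg_axioms.intro prim_axioms two q0e cop P_def Pq_def Dnz Pnz Du Du1 U2 eta1)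
  have kP: "\<eta> powi (k + 1) = P" using assms(9) P_def by simp
  show ?thesis unfolding graph_iso_def GPG_verts_def n_def[symmetric]
    using bij_phi adj_iff[OF kP] by blast
qed

end
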